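(* Let $A$ be a CQG algebra, $Z$ a $*$-algebra with a transitive right $*$-coaction of $A$, identified (via the intertwiner) with a $*$-subalgebra and right coideal of $A$ with coaction $\Delta|_Z$. Let $C$ be a Hopf $*$-algebra with a surjective unital Hopf $*$-algebra homomorphism $\theta:A\to C$ such that $\theta(z)=\varepsilon(z)1_C$ for all $z\in Z$, and put $\delta_C=(\mathrm{id}\otimes\theta)\Delta:Z\to Z\otimes C$. Then every subcomodule $V\subset Z$ (i.e. $\Delta(V)\subset V\otimes A$) of finite dimension $N\ge1$ contains a nonzero $C$-invariant element, i.e. some $\zeta_0\in V$, $\zeta_0\ne0$, with $\delta_C(\zeta_0)=\zeta_0\otimes1_C$.
   Context: A Hopf $*$-algebra is a Hopf algebra $(A,\Delta,\varepsilon,S)$ with an antilinear involution making it a $*$-algebra such that $\Delta,\varepsilon$ are $*$-homomorphisms. A right corepresentation of $A$ on $V$ is a linear $\pi:V\to V\otimes A$ with $(\pi\otimes\mathrm{id})\pi=(\mathrm{id}\otimes\Delta)\pi$ and $(\mathrm{id}\otimes\varepsilon)\pi=\mathrm{id}$; it is unitary w.r.t. an inner product if $\langle\pi(v),\pi(w)\rangle=\langle v,w\rangle1_A$, where $\langle v\otimes a,w\otimes b\rangle=\langle v,w\rangle b^*a$. A CQG algebra is a Hopf $*$-algebra spanned by the matrix coefficients of its finite-dimensional unitary corepresentations; it has a unique normalized Haar functional $h$ ($h(1)=1$, $(h\otimes\mathrm{id})\Delta(a)=h(a)1=(\mathrm{id}\otimes h)\Delta(a)$, $h(a^*a)>0$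 for $a\ne0$). A right $*$-coaction of $A$ on a $*$-algebra $Z$ is a right corepresentation $\delta:Z\to Z\otimes A$ that is a $*$-algebra homomorphism; it is transitive if there is an injective $*$-algebra homomorphism $\psi:Z\to A$ with $\Delta\circ\psi=(\psi\otimes\mathrm{id})\circ\delta$. *)

theory Defs
  imports Complex_Main
begin

text \<open>A complex algebra is a type 'a of class ring_1 (addition, multiplication,
  unit) together with a complex scalar multiplication sc making it a complex vector space,
  compatible with multiplication. An element of the algebraic tensor product V (x) W is
  represented by a finite list of pairs [(v1,w1),...,(vk,wk)] standing for the sum of
  v_i (x) w_i. Two such representatives denote the same tensor iff they cannot be
  separated by products of linear functionals (this characterises equality in the
  algebraic tensor product of complex vector spaces).\<close>

definition tensor_eq ::
  "(complex \<Rightarrow> 'a \<Rightarrow> 'a) \<Rightarrow> (complex \<Rightarrow> 'b \<Rightarrow> 'b) \<Rightarrow>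
   ('a::ab_group_add \<times> 'b::ab_group_add) list \<Rightarrow> ('a \<times> 'b) list \<Rightarrow> bool" where
  "tensor_eq s1 s2 xs ys \<longleftrightarrow>
     (\<forall>f g. Vector_Spaces.linear s1 (*) f \<longrightarrow> Vector_Spaces.linear s2 (*) g \<longrightarrow>
        sum_list (map (\<lambda>(x,y). f x * g y) xs) = sum_list (map (\<lambda>(x,y). f x * g y) ys))"

definition tensor3_eq ::
  "(complex \<Rightarrow> 'a \<Rightarrow> 'a) \<Rightarrow> (complex \<Rightarrow> 'b \<Rightarrow> 'b) \<Rightarrow> (complex \<Rightarrow> 'c \<Rightarrow> 'c) \<Rightarrow>
   ('a::ab_group_add \<times> 'b::ab_group_add \<times> 'c::ab_group_add) list \<Rightarrow> ('a \<times> 'b \<times> 'c) list \<Rightarrow> bool" where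
  "tensor3_eq s1 s2 s3 xs ys \<longleftrightarrow>
     (\<forall>f g h. Vector_Spaces.linear s1 (*) f \<longrightarrow> Vector_Spaces.linear s2 (*) g \<longrightarrow>
        Vector_Spaces.linear s3 (*) h \<longrightarrow>
        sum_list (map (\<lambda>(x,y,z). f x * g y * h z) xs) =
        sum_list (map (\<lambda>(x,y,z). f x * g y * h z) ys))"

text \<open>Data of a Hopf *-algebra on a type 'a: scalar multiplication, involution,
  comultiplication (with values representatives of tensors in A (x) A), counit, antipode.\<close>
record 'a hopf_data =
  sc  :: "complex \<Rightarrow> 'a \<Rightarrow> 'a"
  st  :: "'a \<Rightarrow> 'a"
  cop :: "'a \<Rightarrow> ('a \<times> 'a) list"
  cou :: "'a \<Rightarrow> complex"
  ant :: "'a \<Rightarrow> 'a"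

abbreviation teqH :: "('a::ring_1) hopf_data \<Rightarrow> ('a \<times> 'a) list \<Rightarrow> ('a \<times> 'a) list \<Rightarrow> bool" where
  "teqH H \<equiv> tensor_eq (sc H) (sc H)"

definition hopf_star_algebra :: "('a::ring_1) hopf_data \<Rightarrow> bool" where
  "hopf_star_algebra H \<longleftrightarrow>
     \<comment> \<open>complex algebra\<close>
     vector_space (sc H) \<and>
     (\<forall>c x y. sc H c (x * y) = sc H c x * y \<and> sc H c (x * y) = x * sc H c y) \<and>
     \<comment> \<open>antilinear involution, antimultiplicative: *-algebra\<close>
     (\<forall>x. st H (st H x) = x) \<and>
     (\<forall>x y. st H (x + y) = st H x + st H y) \<and>
     (\<forall>c x. st H (sc H c x) = sc H (cnj c) (st H x)) \<and>
     (\<forall>x y. st H (x * y) = st H y * st H x) \<and>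
     \<comment> \<open>comultiplication: linear, coassociative, unital *-homomorphism\<close>
     (\<forall>x y. teqH H (cop H (x + y)) (cop H x @ cop H y)) \<and>
     (\<forall>c x. teqH H (cop H (sc H c x)) (map (\<lambda>(a,b). (sc H c a, b)) (cop H x))) \<and>
     (\<forall>x. tensor3_eq (sc H) (sc H) (sc H)
            (concat (map (\<lambda>(a,b). map (\<lambda>(a1,a2). (a1, a2, b)) (cop H a)) (cop H x)))
            (concat (map (\<lambda>(a,b). map (\<lambda>(b1,b2). (a, b1, b2)) (cop H b)) (cop H x)))) \<and>
     (\<forall>x y. teqH H (cop H (x * y))
              (concat (map (\<lambda>(a,b). map (\<lambda>(a',b'). (a * a', b * b')) (cop H y)) (cop H x)))) \<and>
     teqH H (cop H 1) [(1, 1)] \<and>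
     (\<forall>x. teqH H (cop H (st H x)) (map (\<lambda>(a,b). (st H a, st H b)) (cop H x))) \<and>
     \<comment> \<open>counit: linear, unital *-homomorphism, counit property\<close>
     (\<forall>x y. cou H (x + y) = cou H x + cou H y) \<and>
     (\<forall>c x. cou H (sc H c x) = c * cou H x) \<and>
     (\<forall>x y. cou H (x * y) = cou H x * cou H y) \<and>
     cou H 1 = 1 \<and>
     (\<forall>x. cou H (st H x) = cnj (cou H x)) \<and>
     (\<forall>x. sum_list (map (\<lambda>(a,b). sc H (cou H a) b) (cop H x)) = x) \<and>
     (\<forall>x. sum_list (map (\<lambda>(a,b). sc H (cou H b) a) (cop H x)) = x) \<and>
     \<comment> \<open>antipode: linear, m(S (x) id)Delta = m(id (x) S)Delta = eps 1\<close>
     (\<forall>x y. ant H (x + y) = ant H x + ant H y) \<and>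
     (\<forall>c x. ant H (sc H c x) = sc H c (ant H x)) \<and>
     (\<forall>x. sum_list (map (\<lambda>(a,b). ant H a * b) (cop H x)) = sc H (cou H x) 1) \<and>
     (\<forall>x. sum_list (map (\<lambda>(a,b). a * ant H b) (cop H x)) = sc H (cou H x) 1)"

text \<open>Finite-dimensional unitary right corepresentation, written in an orthonormal basis
  e_0..e_(n-1): pi(e_j) = sum_i e_i (x) u i j.\<close>
definition unitary_corep :: "('a::ring_1) hopf_data \<Rightarrow> nat \<Rightarrow> (nat \<Rightarrow> nat \<Rightarrow> 'a) \<Rightarrow> bool" where
  "unitary_corep H n u \<longleftrightarrow>
     (\<forall>i<n. \<forall>j<n. teqH H (cop H (u i j)) (map (\<lambda>k. (u i k, u k j)) [0..<n])) \<and>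
     (\<forall>i<n. \<forall>j<n. cou H (u i j) = (if i = j then 1 else 0)) \<and>
     (\<forall>i<n. \<forall>j<n. (\<Sum>k<n. st H (u k j) * u k i) = (if i = j then 1 else 0))"

definition CQG_algebra :: "('a::ring_1) hopf_data \<Rightarrow> bool" where
  "CQG_algebra H \<longleftrightarrow> hopf_star_algebra H \<and>
     module.span (sc H) {u i j | n u i j. unitary_corep H n u \<and> i < n \<and> j < n} = UNIV"

definition hopf_star_hom ::
  "('a::ring_1) hopf_data \<Rightarrow> ('c::ring_1) hopf_data \<Rightarrow> ('a \<Rightarrow> 'c) \<Rightarrow> bool" where
  "hopf_star_hom A C \<theta> \<longleftrightarrow>
     Vector_Spaces.linear (sc A) (sc C) \<theta> \<and>
     (\<forall>x y. \<theta> (x * y) = \<theta> x * \<theta> y) \<and> \<theta> 1 = 1 \<and>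
     (\<forall>x. \<theta> (st A x) = st C (\<theta> x)) \<and>
     (\<forall>x. teqH C (cop C (\<theta> x)) (map (\<lambda>(a,b). (\<theta> a, \<theta> b)) (cop A x))) \<and>
     (\<forall>x. cou C (\<theta> x) = cou A x) \<and>
     (\<forall>x. ant C (\<theta> x) = \<theta> (ant A x))"

definition right_coideal :: "('a::ring_1) hopf_data \<Rightarrow> 'a set \<Rightarrow> bool" where
  "right_coideal H W \<longleftrightarrow> module.subspace (sc H) W \<and>
     (\<forall>w\<in>W. \<exists>xs. fst ` set xs \<subseteq> W \<and> teqH H (cop H w) xs)"

definition star_subalgebra :: "('a::ring_1) hopf_data \<Rightarrow> 'a set \<Rightarrow> bool" where
  "star_subalgebra H Z \<longleftrightarrow> module.subspace (sc H) Z \<and>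
     (\<forall>x\<in>Z. \<forall>y\<in>Z. x * y \<in> Z) \<and> (\<forall>x\<in>Z. st H x \<in> Z)"

end

theory Submission
  imports Defs "HOL-Library.Function_Algebras"
begin

abbreviation lin :: "(complex \<Rightarrow> 'a \<Rightarrow> 'a) \<Rightarrow> ('a::ab_group_add \<Rightarrow> complex) \<Rightarrow> bool" where
  "lin s f \<equiv> Vector_Spaces.linear s ((*)::complex\<Rightarrow>complex\<Rightarrow>complex) f"

lemma vs_complex: "vector_space ((*)::complex \<Rightarrow> complex \<Rightarrow> complex)"
  by unfold_locales (auto simp: algebra_simps)

lemma linD:
  assumes "lin s f"
  shows "f (x + y) = f x + f y" "f (s c x) = c * f x"
  using assms unfolding Vector_Spaces.linear_iff by auto

lemma lin_vs: "lin s f \<Longrightarrow> vector_space s"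
  unfolding Vector_Spaces.linear_iff by auto

lemma linI:
  assumes "vector_space s" "\<And>x y. f (x + y) = f x + f y" "\<And>c x. f (s c x) = c * f x"
  shows "lin s f"
  using assms vs_complex unfolding Vector_Spaces.linear_iff by auto

lemma lin_zero: assumes "lin s f" shows "f 0 = 0"
proof -
  interpret vector_space s using lin_vs[OF assms] .
  have "f (s 0 0) = 0 * f 0" by (rule linD(2)[OF assms])
  then show ?thesis by simp
qed

lemma lin_sum: assumes "lin s f" shows "f (\<Sum>i\<in>F. h i) = (\<Sum>i\<in>F. f (h i))"
  by (induction F rule: infinite_finite_induct) (auto simp: lin_zero[OF assms] linD[OF assms])

lemma lin_sum_list: assumes "lin s f" shows "f (sum_list (map h xs)) = sum_list (map (\<lambda>x. f (h x)) xs)"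
  by (induction xs) (auto simp: lin_zero[OF assms] linD[OF assms])

lemma lin_sum_list2: assumes "lin s f"
  shows "f (sum_list (map (\<lambda>(a,b). h a b) xs)) = sum_list (map (\<lambda>(a,b). f (h a b)) xs)"
  by (induction xs) (auto simp: lin_zero[OF assms] linD[OF assms])

definition gb :: "(complex \<Rightarrow> 'a \<Rightarrow> 'a) \<Rightarrow> 'a::ab_group_add set" where
  "gb s = vector_space.extend_basis s {}"

definition rep :: "(complex \<Rightarrow> 'a \<Rightarrow> 'a) \<Rightarrow> 'a::ab_group_add \<Rightarrow> 'a \<Rightarrow> complex" where
  "rep s v b = module.representation s (gb s) v b"

lemma gb: assumes "vector_space s"
  shows "module.independent s (gb s)" "module.span s (gb s) = UNIV"
proof -
  interpret vector_space s by fact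
  show "independent (gb s)" "span (gb s) = UNIV"
    unfolding gb_def using independent_extend_basis[OF independent_empty]
      span_extend_basis[OF independent_empty] by auto
qed

lemma lin_rep: assumes "vector_space s" shows "lin s (\<lambda>v. rep s v b)"
proof -
  interpret vector_space s by fact
  show ?thesis unfolding rep_def using linear_representation[OF gb[OF assms]] .
qed

lemma rep_expand:
  assumes "vector_space s" "finite F" "{b. rep s v b \<noteq> 0} \<subseteq> F"
  shows "(\<Sum>b\<in>F. s (rep s v b) b) = v"
proof -
  interpret vector_space s by fact
  have "(\<Sum>b\<in>F. s (rep s v b) b) = (\<Sum>b | rep s v b \<noteq> 0. s (rep s v b) b)"
    using assms(2,3) by (intro sum.mono_neutral_cong_right) auto
  also have "\<dots> = v" unfolding rep_def
    using sum_nonzero_representation_eq[OF gb(1)[OF assms(1)]] gb(2)[OF assms(1)] by auto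
  finally show ?thesis .
qed

lemma rep_finite: assumes "vector_space s" shows "finite {b. rep s v b \<noteq> 0}"
proof -
  interpret vector_space s by fact
  show ?thesis unfolding rep_def by (rule finite_representation)
qed

lemma separation:
  assumes "vector_space s" "\<And>g. lin s g \<Longrightarrow> g x = g y"
  shows "x = y"
proof -
  have e: "rep s x = rep s y" using assms(2)[OF lin_rep[OF assms(1)]] by auto
  have "x = (\<Sum>b\<in>{b. rep s x b \<noteq> 0}. s (rep s x b) b)"
    using rep_expand[OF assms(1) rep_finite[OF assms(1)]] by simp
  also have "\<dots> = y" unfolding e using rep_expand[OF assms(1) rep_finite[OF assms(1)]] by simp
  finally show ?thesis .
qed

lemma sum_list_sum_swap:
  "sum_list (map (\<lambda>(x,y). \<Sum>b\<in>F. h x y b) xs) = (\<Sum>b\<in>F. sum_list (map (\<lambda>(x,y). h x y b) xs))"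
  by (induction xs) (auto simp: sum.distrib)

lemma teq_bilin:
  assumes vs1: "vector_space s1" and vs2: "vector_space s2"
    and teq: "tensor_eq s1 s2 xs ys"
    and l1: "\<And>b. lin s1 (\<lambda>a. B a b)" and l2: "\<And>a. lin s2 (\<lambda>b. B a b)"
  shows "sum_list (map (\<lambda>(a,b). B a b) xs) = sum_list (map (\<lambda>(a,b). B a b) ys)"
proof -
  define F where "F = (\<Union>p\<in>set (xs @ ys). {b. rep s1 (fst p) b \<noteq> 0})"
  have fF: "finite F" unfolding F_def using rep_finite[OF vs1] by auto
  have ex: "B a b = (\<Sum>\<beta>\<in>F. rep s1 a \<beta> * B \<beta> b)" if "(a,b) \<in> set (xs @ ys)" for a b
  proof -
    have sub: "{\<beta>. rep s1 a \<beta> \<noteq> 0} \<subseteq> F" unfolding F_def using that by force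
    have "B a b = B (\<Sum>\<beta>\<in>F. s1 (rep s1 a \<beta>) \<beta>) b" using rep_expand[OF vs1 fF sub] by simp
    also have "\<dots> = (\<Sum>\<beta>\<in>F. rep s1 a \<beta> * B \<beta> b)"
      by (simp add: lin_sum[OF l1] linD[OF l1])
    finally show ?thesis .
  qed
  have "sum_list (map (\<lambda>(a,b). B a b) xs) = sum_list (map (\<lambda>(a,b). \<Sum>\<beta>\<in>F. rep s1 a \<beta> * B \<beta> b) xs)"
    by (rule arg_cong[where f=sum_list], rule map_cong) (auto simp: ex)
  also have "\<dots> = (\<Sum>\<beta>\<in>F. sum_list (map (\<lambda>(a,b). rep s1 a \<beta> * B \<beta> b) xs))"
    by (rule sum_list_sum_swap)
  also have "\<dots> = (\<Sum>\<beta>\<in>F. sum_list (map (\<lambda>(a,b). rep s1 a \<beta> * B \<beta> b) ys))"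
    using teq lin_rep[OF vs1] l2 unfolding tensor_eq_def by (intro sum.cong) auto
  also have "\<dots> = sum_list (map (\<lambda>(a,b). \<Sum>\<beta>\<in>F. rep s1 a \<beta> * B \<beta> b) ys)"
    by (rule sum_list_sum_swap[symmetric])
  also have "\<dots> = sum_list (map (\<lambda>(a,b). B a b) ys)"
    by (rule arg_cong[where f=sum_list], rule map_cong) (auto simp: ex)
  finally show ?thesis .
qed

lemma hsa_all:
  assumes "hopf_star_algebra H"
  shows "vector_space (sc H) \<and>
     (\<forall>c x y. sc H c (x * y) = sc H c x * y \<and> sc H c (x * y) = x * sc H c y) \<and>
     (\<forall>x. st H (st H x) = x) \<and>
     (\<forall>x y. st H (x + y) = st H x + st H y) \<and>
     (\<forall>c x. st H (sc H c x) = sc H (cnj c) (st H x)) \<and>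
     (\<forall>x y. st H (x * y) = st H y * st H x) \<and>
     (\<forall>x y. teqH H (cop H (x + y)) (cop H x @ cop H y)) \<and>
     (\<forall>c x. teqH H (cop H (sc H c x)) (map (\<lambda>(a,b). (sc H c a, b)) (cop H x))) \<and>
     (\<forall>x y. cou H (x + y) = cou H x + cou H y) \<and>
     (\<forall>c x. cou H (sc H c x) = c * cou H x) \<and>
     (\<forall>x. sum_list (map (\<lambda>(a,b). sc H (cou H a) b) (cop H x)) = x) \<and>
     (\<forall>x y. ant H (x + y) = ant H x + ant H y) \<and>
     (\<forall>c x. ant H (sc H c x) = sc H c (ant H x)) \<and>
     (\<forall>x. sum_list (map (\<lambda>(a,b). a * ant H b) (cop H x)) = sc H (cou H x) 1)"
  using assms unfolding hopf_star_algebra_def by (elim conjE) (intro conjI; assumption)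

lemma hsaD:
  assumes "hopf_star_algebra H"
  shows hsa_vs: "vector_space (sc H)"
    and hsa_scm1: "\<And>c x y. sc H c (x * y) = sc H c x * y"
    and hsa_scm2: "\<And>c x y. sc H c (x * y) = x * sc H c y"
    and hsa_stst: "\<And>x. st H (st H x) = x"
    and hsa_stadd: "\<And>x y. st H (x + y) = st H x + st H y"
    and hsa_stsc: "\<And>c x. st H (sc H c x) = sc H (cnj c) (st H x)"
    and hsa_stmult: "\<And>x y. st H (x * y) = st H y * st H x"
    and hsa_copadd: "\<And>x y. teqH H (cop H (x + y)) (cop H x @ cop H y)"
    and hsa_copsc: "\<And>c x. teqH H (cop H (sc H c x)) (map (\<lambda>(a,b). (sc H c a, b)) (cop H x))"
    and hsa_couadd: "\<And>x y. cou H (x + y) = cou H x + cou H y"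
    and hsa_cousc: "\<And>c x. cou H (sc H c x) = c * cou H x"
    and hsa_counit: "\<And>x. sum_list (map (\<lambda>(a,b). sc H (cou H a) b) (cop H x)) = x"
    and hsa_antadd: "\<And>x y. ant H (x + y) = ant H x + ant H y"
    and hsa_antsc: "\<And>c x. ant H (sc H c x) = sc H c (ant H x)"
    and hsa_antipode: "\<And>x. sum_list (map (\<lambda>(a,b). a * ant H b) (cop H x)) = sc H (cou H x) 1"
  using hsa_all[OF assms] apply -
  apply (elim conjE, assumption)
  apply (elim conjE, (blast | metis))+
  done

lemma sum_delta_l: "finite S \<Longrightarrow> (\<Sum>c\<in>S. (if i = c then 1 else 0) * f c) = (if i \<in> S then f i else (0::'b::ring_1))"
proof -
  assume "finite S"
  have "(\<Sum>c\<in>S. (if i = c then 1 else 0) * f c) = (\<Sum>c\<in>S. if c = i then f c else 0)"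
    by (intro sum.cong) auto
  then show ?thesis using \<open>finite S\<close> by (simp add: sum.delta)
qed

lemma sum_delta_r: "finite S \<Longrightarrow> (\<Sum>c\<in>S. f c * (if c = j then 1 else 0)) = (if j \<in> S then f j else (0::'b::ring_1))"
proof -
  assume "finite S"
  have "(\<Sum>c\<in>S. f c * (if c = j then 1 else 0)) = (\<Sum>c\<in>S. if c = j then f c else 0)"
    by (intro sum.cong) auto
  then show ?thesis using \<open>finite S\<close> by (simp add: sum.delta)
qed

lemma ring_swap: "(\<Sum>c\<in>J. (\<Sum>k\<in>I. a k * b k c) * d c) = (\<Sum>k\<in>I. a k * (\<Sum>c\<in>J. b k c * d c))"
  for a :: "_ \<Rightarrow> 'b::ring_1"
proof -
  have "(\<Sum>c\<in>J. (\<Sum>k\<in>I. a k * b k c) * d c) = (\<Sum>c\<in>J. \<Sum>k\<in>I. a k * b k c * d c)"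
    by (simp add: sum_distrib_right)
  also have "\<dots> = (\<Sum>k\<in>I. \<Sum>c\<in>J. a k * b k c * d c)" by (rule sum.swap)
  also have "\<dots> = (\<Sum>k\<in>I. a k * (\<Sum>c\<in>J. b k c * d c))" by (simp add: sum_distrib_left mult.assoc)
  finally show ?thesis .
qed

definition E :: "('a::ring_1) hopf_data \<Rightarrow> ('a \<Rightarrow> complex) \<Rightarrow> ('a \<Rightarrow> complex) \<Rightarrow> 'a \<Rightarrow> complex" where
  "E H f g x = sum_list (map (\<lambda>(a,b). f a * g b) (cop H x))"

context
  fixes H :: "('a::ring_1) hopf_data"
  assumes hsa: "hopf_star_algebra H"
begin

lemma st0: "st H 0 = 0"
  using hsa_stadd[OF hsa, of 0 0] by simp

lemma st_sum: "st H (\<Sum>i\<in>F. h i) = (\<Sum>i\<in>F. st H (h i))"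
  by (induction F rule: infinite_finite_induct) (auto simp: st0 hsa_stadd[OF hsa])

lemma st_diff: "st H (x - y) = st H x - st H y"
  using hsa_stadd[OF hsa, of "x - y" y] by (simp add: algebra_simps)

lemma st1: "st H 1 = 1"
proof -
  have "st H 1 = st H 1 * st H (st H 1)" by (simp add: hsa_stst[OF hsa])
  also have "\<dots> = st H (st H 1 * 1)" by (metis hsa_stmult[OF hsa])
  finally show ?thesis by (simp add: hsa_stst[OF hsa])
qed

lemma ant0: "ant H 0 = 0"
  using hsa_antadd[OF hsa, of 0 0] by simp

lemma ant_sum: "ant H (\<Sum>i\<in>F. h i) = (\<Sum>i\<in>F. ant H (h i))"
  by (induction F rule: infinite_finite_induct) (auto simp: ant0 hsa_antadd[OF hsa])

lemma sc_sum: "sc H c (\<Sum>i\<in>F. h i) = (\<Sum>i\<in>F. sc H c (h i))"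
proof -
  interpret vector_space "sc H" by (rule hsa_vs[OF hsa])
  show ?thesis by (rule scale_sum_right)
qed

lemma sc_sum_left: "sc H (\<Sum>i\<in>F. h i) x = (\<Sum>i\<in>F. sc H (h i) x)"
proof -
  interpret vector_space "sc H" by (rule hsa_vs[OF hsa])
  show ?thesis by (rule scale_sum_left)
qed

lemma sc_sc: "sc H a (sc H b x) = sc H (a * b) x"
proof -
  interpret vector_space "sc H" by (rule hsa_vs[OF hsa])
  show ?thesis by simp
qed

lemma sc_one: "sc H 1 x = x"
proof -
  interpret vector_space "sc H" by (rule hsa_vs[OF hsa])
  show ?thesis by simp
qed

lemma sc_zero: "sc H 0 x = 0" "sc H c 0 = 0"
proof -
  interpret vector_space "sc H" by (rule hsa_vs[OF hsa])
  show "sc H 0 x = 0" "sc H c 0 = 0" by simp_all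
qed

lemma sc_add: "sc H c (x + y) = sc H c x + sc H c y" "sc H (a + b) x = sc H a x + sc H b x"
proof -
  interpret vector_space "sc H" by (rule hsa_vs[OF hsa])
  show "sc H c (x + y) = sc H c x + sc H c y" "sc H (a + b) x = sc H a x + sc H b x"
    by (simp_all add: scale_right_distrib scale_left_distrib)
qed

lemma sc_diff: "sc H c (x - y) = sc H c x - sc H c y"
proof -
  interpret vector_space "sc H" by (rule hsa_vs[OF hsa])
  show ?thesis by (simp add: scale_right_diff_distrib)
qed

lemma lin_cou: "lin (sc H) (cou H)"
  by (rule linI[OF hsa_vs[OF hsa]]) (auto simp: hsa_couadd[OF hsa] hsa_cousc[OF hsa])

lemma cou0: "cou H 0 = 0"
  by (rule lin_zero[OF lin_cou])

lemma E_add: assumes "lin (sc H) f" "lin (sc H) g"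
  shows "E H f g (x + y) = E H f g x + E H f g y"
  using hsa_copadd[OF hsa, of x y] assms unfolding tensor_eq_def E_def by auto

lemma E_sc: assumes "lin (sc H) f" "lin (sc H) g"
  shows "E H f g (sc H c x) = c * E H f g x"
proof -
  have "E H f g (sc H c x) = sum_list (map (\<lambda>(a,b). f a * g b) (map (\<lambda>(a,b). (sc H c a, b)) (cop H x)))"
    using hsa_copsc[OF hsa, of c x] assms unfolding tensor_eq_def E_def by auto
  also have "\<dots> = sum_list (map (\<lambda>p. c * (case p of (a,b) \<Rightarrow> f a * g b)) (cop H x))"
    by (rule arg_cong[where f=sum_list]) (auto simp: linD[OF assms(1)])
  also have "\<dots> = c * E H f g x" unfolding E_def by (simp add: sum_list_const_mult)
  finally show ?thesis .
qed

lemma lin_E: assumes "lin (sc H) f" "lin (sc H) g" shows "lin (sc H) (E H f g)"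
  by (rule linI[OF hsa_vs[OF hsa]]) (auto simp: E_add[OF assms] E_sc[OF assms])

lemma E_counit: assumes "lin (sc H) g" shows "E H (cou H) g x = g x"
proof -
  have "g x = g (sum_list (map (\<lambda>(a,b). sc H (cou H a) b) (cop H x)))"
    by (simp add: hsa_counit[OF hsa])
  also have "\<dots> = sum_list (map (\<lambda>p. g (case p of (a,b) \<Rightarrow> sc H (cou H a) b)) (cop H x))"
    by (rule lin_sum_list[OF assms])
  also have "\<dots> = E H (cou H) g x" unfolding E_def
    by (rule arg_cong[where f=sum_list]) (auto simp: linD[OF assms])
  finally show ?thesis by simp
qed

lemma sep: "(\<And>g. lin (sc H) g \<Longrightarrow> g x = g y) \<Longrightarrow> x = y"
  by (rule separation[OF hsa_vs[OF hsa]])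

lemma unitary_antipode:
  assumes u: "unitary_corep H n u" and ij: "i < n" "j < n"
  shows "(\<Sum>c<n. u i c * ant H (u c j)) = (if i = j then 1 else 0)"
proof (rule sep)
  fix g assume g: "lin (sc H) g"
  define B where "B a b = g (a * ant H b)" for a b
  have l1: "lin (sc H) (\<lambda>a. B a b)" for b unfolding B_def
    by (rule linI[OF hsa_vs[OF hsa]]) (auto simp: distrib_right linD[OF g] hsa_scm1[OF hsa, symmetric])
  have l2: "lin (sc H) (\<lambda>b. B a b)" for a unfolding B_def
    by (rule linI[OF hsa_vs[OF hsa]])
       (auto simp: distrib_left hsa_antadd[OF hsa] hsa_antsc[OF hsa] linD[OF g] hsa_scm2[OF hsa, symmetric])
  have teq: "teqH H (cop H (u i j)) (map (\<lambda>k. (u i k, u k j)) [0..<n])"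
    using u ij unfolding unitary_corep_def by auto
  have "g (\<Sum>c<n. u i c * ant H (u c j)) = (\<Sum>c<n. B (u i c) (u c j))"
    by (simp add: lin_sum[OF g] B_def)
  also have "\<dots> = sum_list (map (\<lambda>(a,b). B a b) (map (\<lambda>k. (u i k, u k j)) [0..<n]))"
    by (simp add: sum_list_sum_nth atLeast0LessThan)
  also have "\<dots> = sum_list (map (\<lambda>(a,b). B a b) (cop H (u i j)))"
    by (rule teq_bilin[OF hsa_vs[OF hsa] hsa_vs[OF hsa] teq l1 l2, symmetric])
  also have "\<dots> = g (sum_list (map (\<lambda>(a,b). a * ant H b) (cop H (u i j))))"
    unfolding B_def by (rule lin_sum_list2[OF g, symmetric])
  also have "\<dots> = g (sc H (cou H (u i j)) 1)" by (simp add: hsa_antipode[OF hsa])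
  also have "\<dots> = g (if i = j then 1 else 0)"
    using u ij unfolding unitary_corep_def by (auto simp: sc_one sc_zero)
  finally show "g (\<Sum>c<n. u i c * ant H (u c j)) = g (if i = j then 1 else 0)" .
qed

lemma unitary_U1:
  assumes u: "unitary_corep H n u" and ij: "i < n" "j < n"
  shows "st H (u j i) = ant H (u i j)"
proof -
  have uni: "(\<Sum>k<n. st H (u k j) * u k i) = (if i = j then 1 else 0)" if "i < n" "j < n" for i j
    using u that unfolding unitary_corep_def by auto
  have "ant H (u i j) = (\<Sum>c<n. (if i = c then 1 else 0) * ant H (u c j))"
    using ij by (simp add: sum_delta_l)
  also have "\<dots> = (\<Sum>c<n. (\<Sum>k<n. st H (u k i) * u k c) * ant H (u c j))"
    using ij uni by (intro sum.cong) auto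
  also have "\<dots> = (\<Sum>k<n. st H (u k i) * (\<Sum>c<n. u k c * ant H (u c j)))"
    by (rule ring_swap)
  also have "\<dots> = (\<Sum>k<n. st H (u k i) * (if k = j then 1 else 0))"
    using unitary_antipode[OF u] ij by (intro sum.cong) auto
  also have "\<dots> = st H (u j i)" using ij by (simp add: sum_delta_r)
  finally show ?thesis by simp
qed

lemma unitary_U2:
  assumes u: "unitary_corep H n u" and ij: "i < n" "j < n"
  shows "(\<Sum>k<n. u i k * st H (u j k)) = (if i = j then 1 else 0)"
proof -
  have "(\<Sum>k<n. u i k * st H (u j k)) = (\<Sum>k<n. u i k * ant H (u k j))"
    using unitary_U1[OF u] ij by (intro sum.cong) auto
  then show ?thesis using unitary_antipode[OF u ij] by simp
qed

end

lemma homD: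
  assumes "hopf_star_hom A C \<theta>"
  shows hom_lin: "Vector_Spaces.linear (sc A) (sc C) \<theta>"
    and hom_mult: "\<And>x y. \<theta> (x * y) = \<theta> x * \<theta> y"
    and hom_one: "\<theta> 1 = 1"
    and hom_st: "\<And>x. \<theta> (st A x) = st C (\<theta> x)"
  using assms unfolding hopf_star_hom_def by auto

lemma hom_add: "Vector_Spaces.linear s1 s2 \<theta> \<Longrightarrow> \<theta> (x + y) = \<theta> x + \<theta> y"
  unfolding Vector_Spaces.linear_iff by auto
lemma hom_sc: "Vector_Spaces.linear s1 s2 \<theta> \<Longrightarrow> \<theta> (s1 c x) = s2 c (\<theta> x)"
  unfolding Vector_Spaces.linear_iff by auto
lemma hom_zero: "Vector_Spaces.linear s1 s2 \<theta> \<Longrightarrow> \<theta> 0 = 0"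
  using hom_add[of s1 s2 \<theta> 0 0] by simp
lemma hom_diff: "Vector_Spaces.linear s1 s2 \<theta> \<Longrightarrow> \<theta> (x - y) = \<theta> x - \<theta> y"
  using hom_add[of s1 s2 \<theta> "x - y" y] by (simp add: algebra_simps)
lemma hom_sum: "Vector_Spaces.linear s1 s2 \<theta> \<Longrightarrow> \<theta> (\<Sum>i\<in>F. h i) = (\<Sum>i\<in>F. \<theta> (h i))"
  by (induction F rule: infinite_finite_induct) (auto simp: hom_zero hom_add)

lemma lin_comp: "Vector_Spaces.linear s1 s2 \<theta> \<Longrightarrow> lin s2 g \<Longrightarrow> lin s1 (\<lambda>x. g (\<theta> x))"
  unfolding Vector_Spaces.linear_iff by auto

lemma cnj_sum_pos:
  assumes "finite I" "j \<in> I" "(l j :: complex) \<noteq> 0"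
  shows "(\<Sum>i\<in>I. cnj (l i) * l i) \<noteq> 0"
proof -
  have e: "(\<Sum>i\<in>I. cnj (l i) * l i) = complex_of_real (\<Sum>i\<in>I. (cmod (l i))^2)"
  proof -
    have "cnj (l i) * l i = complex_of_real ((cmod (l i))^2)" for i
      by (metis complex_norm_square mult.commute)
    then show ?thesis by (simp only: of_real_sum)
  qed
  have "0 < (\<Sum>i\<in>I. (cmod (l i))^2)"
    using assms by (intro sum_pos2[of I j]) auto
  then show ?thesis unfolding e by (metis of_real_eq_0_iff less_irrefl)
qed

lemma map_pair_theta: "sum_list (map (\<lambda>(x,y). f x * g y) (map (\<lambda>(a,b). (a, \<theta> b)) xs))
   = sum_list (map (\<lambda>(a,b). f a * g (\<theta> b)) xs)"
  by (induction xs) auto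

lemma final_step:
  fixes A :: "('a::ring_1) hopf_data" and C :: "('c::ring_1) hopf_data"
  assumes hA: "hopf_star_algebra A" and hC: "hopf_star_algebra C"
    and hom: "hopf_star_hom A C \<theta>"
    and Zh: "\<forall>z\<in>Z. \<theta> z = sc C (cou A z) 1" and VZ: "V \<subseteq> Z"
    and Vsub: "module.subspace (sc A) V"
    and fI: "finite I"
    and \<psi>V: "\<And>j. j \<in> I \<Longrightarrow> \<psi> j \<in> V"
    and M1: "\<And>f g j. lin (sc A) f \<Longrightarrow> lin (sc A) g \<Longrightarrow> j \<in> I \<Longrightarrow>
                E A f g (\<psi> j) = (\<Sum>i\<in>I. f (\<psi> i) * g (M i j))"
    and M3: "\<And>i k. i \<in> I \<Longrightarrow> k \<in> I \<Longrightarrow> (\<Sum>j\<in>I. M i j * st A (M k j)) = (if i = k then 1 else 0)"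
    and nz: "\<exists>j\<in>I. cou A (\<psi> j) \<noteq> 0"
  shows "\<exists>\<zeta>\<^sub>0\<in>V. \<zeta>\<^sub>0 \<noteq> 0 \<and>
           tensor_eq (sc A) (sc C) (map (\<lambda>(a,b). (a, \<theta> b)) (cop A \<zeta>\<^sub>0)) [(\<zeta>\<^sub>0, 1)]"
proof -
  interpret VA: vector_space "sc A" by (rule hsa_vs[OF hA])
  note tl = hom_lin[OF hom]
  define l where "l j = cou A (\<psi> j)" for j
  define \<zeta> where "\<zeta> = (\<Sum>j\<in>I. sc A (cnj (l j)) (\<psi> j))"
  have \<zeta>V: "\<zeta> \<in> V" unfolding \<zeta>_def
    by (rule VA.subspace_sum[OF Vsub]) (auto intro: VA.subspace_scale[OF Vsub] \<psi>V)
  have cou\<zeta>: "cou A \<zeta> = (\<Sum>j\<in>I. cnj (l j) * l j)"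
    unfolding \<zeta>_def by (simp add: lin_sum[OF lin_cou[OF hA]] linD[OF lin_cou[OF hA]] l_def)
  have \<zeta>nz: "\<zeta> \<noteq> 0"
  proof
    assume "\<zeta> = 0"
    then have "cou A \<zeta> = 0" by (simp add: cou0[OF hA])
    moreover obtain j where "j \<in> I" "l j \<noteq> 0" using nz l_def by auto
    ultimately show False using cnj_sum_pos[OF fI] cou\<zeta> by metis
  qed
  have \<psi>exp: "\<psi> j = (\<Sum>i\<in>I. sc A (l i) (M i j))" if j: "j \<in> I" for j
  proof (rule sep[OF hA])
    fix g assume g: "lin (sc A) g"
    have "g (\<psi> j) = E A (cou A) g (\<psi> j)" by (simp add: E_counit[OF hA g])
    also have "\<dots> = (\<Sum>i\<in>I. l i * g (M i j))" using M1[OF lin_cou[OF hA] g j] l_def by simp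
    also have "\<dots> = g (\<Sum>i\<in>I. sc A (l i) (M i j))" by (simp add: lin_sum[OF g] linD[OF g])
    finally show "g (\<psi> j) = g (\<Sum>i\<in>I. sc A (l i) (M i j))" .
  qed
  define y where "y j = \<psi> j - sc A (l j) 1" for j
  have \<theta>y: "\<theta> (y j) = 0" if "j \<in> I" for j
  proof -
    have "\<psi> j \<in> Z" using \<psi>V[OF that] VZ by auto
    then have "\<theta> (\<psi> j) = sc C (l j) 1" using Zh l_def by auto
    then show ?thesis unfolding y_def by (simp add: hom_diff[OF tl] hom_sc[OF tl] hom_one[OF hom])
  qed
  have key: "\<theta> (\<Sum>j\<in>I. sc A (cnj (l j)) (M i j)) = sc C (cnj (l i)) 1" if i: "i \<in> I" for i
  proof -
    have "(\<Sum>j\<in>I. M i j * st A (\<psi> j)) = (\<Sum>j\<in>I. M i j * (\<Sum>k\<in>I. sc A (cnj (l k)) (st A (M k j))))"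
      by (intro sum.cong) (auto simp: \<psi>exp st_sum[OF hA] hsa_stsc[OF hA])
    also have "\<dots> = (\<Sum>k\<in>I. sc A (cnj (l k)) (\<Sum>j\<in>I. M i j * st A (M k j)))"
    proof -
      have "(\<Sum>j\<in>I. M i j * (\<Sum>k\<in>I. sc A (cnj (l k)) (st A (M k j))))
          = (\<Sum>j\<in>I. \<Sum>k\<in>I. sc A (cnj (l k)) (M i j * st A (M k j)))"
        by (simp add: sum_distrib_left hsa_scm2[OF hA, symmetric])
      also have "\<dots> = (\<Sum>k\<in>I. \<Sum>j\<in>I. sc A (cnj (l k)) (M i j * st A (M k j)))" by (rule sum.swap)
      finally show ?thesis by (simp add: sc_sum[OF hA])
    qed
    also have "\<dots> = (\<Sum>k\<in>I. sc A (cnj (l k)) (if i = k then 1 else 0))"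
      using M3 i by (intro sum.cong) auto
    also have "\<dots> = (\<Sum>k\<in>I. if k = i then sc A (cnj (l k)) 1 else 0)"
      by (intro sum.cong refl) (auto simp: sc_zero[OF hA])
    also have "\<dots> = sc A (cnj (l i)) 1"
      using fI i by (simp add: sum.delta)
    finally have e1: "(\<Sum>j\<in>I. M i j * st A (\<psi> j)) = sc A (cnj (l i)) 1" .
    have e2: "(\<Sum>j\<in>I. M i j * st A (sc A (l j) 1)) = (\<Sum>j\<in>I. sc A (cnj (l j)) (M i j))"
      by (intro sum.cong) (auto simp: hsa_stsc[OF hA] st1[OF hA] hsa_scm2[OF hA, symmetric])
    have "(\<Sum>j\<in>I. M i j * st A (y j)) = sc A (cnj (l i)) 1 - (\<Sum>j\<in>I. sc A (cnj (l j)) (M i j))"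
      unfolding y_def by (simp add: st_diff[OF hA] right_diff_distrib sum_subtractf e1 e2)
    moreover have "\<theta> (\<Sum>j\<in>I. M i j * st A (y j)) = 0"
      using \<theta>y by (simp add: hom_sum[OF tl] hom_mult[OF hom] hom_st[OF hom] st0[OF hC])
    ultimately have "\<theta> (sc A (cnj (l i)) 1) = \<theta> (\<Sum>j\<in>I. sc A (cnj (l j)) (M i j))"
      by (simp add: hom_diff[OF tl])
    then show ?thesis by (simp add: hom_sc[OF tl] hom_one[OF hom])
  qed
  show ?thesis
  proof (intro bexI conjI)
    show "\<zeta> \<in> V" "\<zeta> \<noteq> 0" by fact+
    show "tensor_eq (sc A) (sc C) (map (\<lambda>(a,b). (a, \<theta> b)) (cop A \<zeta>)) [(\<zeta>, 1)]"
      unfolding tensor_eq_def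
    proof (intro allI impI)
      fix f g assume f: "lin (sc A) f" and g: "lin (sc C) g"
      have g': "lin (sc A) (\<lambda>x. g (\<theta> x))" by (rule lin_comp[OF tl g])
      have "sum_list (map (\<lambda>(x,y). f x * g y) (map (\<lambda>(a,b). (a, \<theta> b)) (cop A \<zeta>)))
          = E A f (\<lambda>x. g (\<theta> x)) \<zeta>"
        unfolding E_def by (rule map_pair_theta)
      also have "\<dots> = (\<Sum>j\<in>I. cnj (l j) * E A f (\<lambda>x. g (\<theta> x)) (\<psi> j))"
        unfolding \<zeta>_def by (simp add: lin_sum[OF lin_E[OF hA f g']] linD[OF lin_E[OF hA f g']])
      also have "\<dots> = (\<Sum>j\<in>I. cnj (l j) * (\<Sum>i\<in>I. f (\<psi> i) * g (\<theta> (M i j))))"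
        by (intro sum.cong) (auto simp: M1[OF f g'])
      also have "\<dots> = (\<Sum>i\<in>I. f (\<psi> i) * g (\<theta> (\<Sum>j\<in>I. sc A (cnj (l j)) (M i j))))"
      proof -
        have "(\<Sum>j\<in>I. cnj (l j) * (\<Sum>i\<in>I. f (\<psi> i) * g (\<theta> (M i j))))
            = (\<Sum>j\<in>I. \<Sum>i\<in>I. f (\<psi> i) * (cnj (l j) * g (\<theta> (M i j))))"
          by (simp add: sum_distrib_left mult.left_commute)
        also have "\<dots> = (\<Sum>i\<in>I. \<Sum>j\<in>I. f (\<psi> i) * (cnj (l j) * g (\<theta> (M i j))))" by (rule sum.swap)
        finally show ?thesis
          by (simp add: hom_sum[OF tl] hom_sc[OF tl] lin_sum[OF g] linD[OF g] sum_distrib_left)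
      qed
      also have "\<dots> = (\<Sum>i\<in>I. f (\<psi> i) * (cnj (l i) * g 1))"
        by (intro sum.cong) (auto simp: key linD[OF g])
      also have "\<dots> = f \<zeta> * g 1"
        unfolding \<zeta>_def by (simp add: lin_sum[OF f] linD[OF f] sum_distrib_right mult.assoc mult.left_commute)
      finally show "sum_list (map (\<lambda>(x,y). f x * g y) (map (\<lambda>(a,b). (a, \<theta> b)) (cop A \<zeta>)))
          = sum_list (map (\<lambda>(x,y). f x * g y) [(\<zeta>, 1)])" by simp
    qed
  qed
qed

definition cs :: "complex \<Rightarrow> ('i \<Rightarrow> complex) \<Rightarrow> ('i \<Rightarrow> complex)" where
  "cs c f = (\<lambda>i. c * f i)"

lemma vs_cs: "vector_space cs"
  by unfold_locales (auto simp: cs_def algebra_simps fun_eq_iff)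

lemma expand4: "(\<Sum>k\<in>I. (a k + b * c k) * (d k + e k * f)) = (\<Sum>k\<in>I. a k * d k) + (\<Sum>k\<in>I. a k * e k) * f + b * (\<Sum>k\<in>I. c k * d k) + b * (\<Sum>k\<in>I. c k * e k) * f" for a c d e :: "'i \<Rightarrow> complex"
  by (simp add: distrib_left distrib_right sum.distrib sum_distrib_left sum_distrib_right mult.assoc mult.left_commute add.assoc)
lemma expand2: "(\<Sum>j\<in>I. (a j + b * c j) * s j) = (\<Sum>j\<in>I. a j * s j) + b * (\<Sum>j\<in>I. c j * s j)" for a c s :: "'i \<Rightarrow> complex"
  by (simp add: distrib_right sum.distrib sum_distrib_left mult.assoc)

lemma swap_mult: "(\<Sum>k\<in>I. a k * (\<Sum>j\<in>J. b k j * c j)) = (\<Sum>j\<in>J. (\<Sum>k\<in>I. a k * b k j) * c j)" for a c :: "_ \<Rightarrow> complex"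
proof -
  have "(\<Sum>k\<in>I. a k * (\<Sum>j\<in>J. b k j * c j)) = (\<Sum>k\<in>I. \<Sum>j\<in>J. a k * b k j * c j)"
    by (simp add: sum_distrib_left mult.assoc)
  also have "\<dots> = (\<Sum>j\<in>J. \<Sum>k\<in>I. a k * b k j * c j)" by (rule sum.swap)
  also have "\<dots> = (\<Sum>j\<in>J. (\<Sum>k\<in>I. a k * b k j) * c j)" by (simp add: sum_distrib_right)
  finally show ?thesis .
qed

lemma sum_apply: "(\<Sum>i\<in>F. f i) x = (\<Sum>i\<in>F. f i x)"
  by (induction F rule: infinite_finite_induct) auto

definition herm :: "('i \<Rightarrow> 'i \<Rightarrow> complex) \<Rightarrow> bool" where
  "herm Q \<longleftrightarrow> (\<forall>i j. Q j i = cnj (Q i j))"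

definition col :: "'i set \<Rightarrow> ('i \<Rightarrow> 'i \<Rightarrow> complex) \<Rightarrow> 'i \<Rightarrow> ('i \<Rightarrow> complex)" where
  "col I Q j = (\<lambda>i. if i \<in> I then Q i j else 0)"

definition fixes_v :: "'i set \<Rightarrow> ('i \<Rightarrow> 'i \<Rightarrow> complex) \<Rightarrow> ('i \<Rightarrow> complex) \<Rightarrow> bool" where
  "fixes_v I Q v \<longleftrightarrow> (\<forall>i\<in>I. (\<Sum>j\<in>I. Q i j * v j) = v i)"

context
  fixes I :: "'i set" and P :: "('i \<Rightarrow> complex) set"
  assumes fI: "finite I"
    and Psub: "module.subspace cs P"
    and Psupp: "\<And>\<xi> i. \<xi> \<in> P \<Longrightarrow> i \<notin> I \<Longrightarrow> \<xi> i = 0"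
begin

interpretation CS: vector_space cs by (rule vs_cs)

lemma app_in_P:
  assumes cols: "\<forall>j\<in>I. col I Q j \<in> P"
  shows "(\<lambda>i. if i \<in> I then (\<Sum>j\<in>I. Q i j * v j) else 0) \<in> P"
proof -
  have "(\<lambda>i. if i \<in> I then (\<Sum>j\<in>I. Q i j * v j) else 0) = (\<Sum>j\<in>I. cs (v j) (col I Q j))"
    by (auto simp: fun_eq_iff sum_apply cs_def col_def mult.commute)
  also have "\<dots> \<in> P"
    using cols by (intro CS.subspace_sum[OF Psub] CS.subspace_scale[OF Psub]) auto
  finally show ?thesis .
qed

lemma fixes_subspace: "module.subspace cs (Collect (fixes_v I Q))"
  unfolding CS.subspace_def fixes_v_def
  by (auto simp: cs_def distrib_left sum.distrib mult.left_commute[of _ "_::complex"] sum_distrib_left[symmetric])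

lemma GS:
  assumes "finite S" "S \<subseteq> P"
  shows "\<exists>Q. herm Q \<and> (\<forall>j\<in>I. col I Q j \<in> P) \<and>
     (\<forall>i\<in>I. \<forall>j\<in>I. (\<Sum>k\<in>I. Q i k * Q k j) = Q i j) \<and> (\<forall>v\<in>S. fixes_v I Q v)"
  using assms
proof (induction S rule: finite_induct)
  case empty
  show ?case
  proof (rule exI[of _ "\<lambda>i j. 0"], intro conjI)
    have "col I (\<lambda>i j. 0) j = 0" for j by (simp add: col_def fun_eq_iff)
    then show "\<forall>j\<in>I. col I (\<lambda>i j. 0) j \<in> P" using CS.subspace_0[OF Psub] by simp
  qed (auto simp: herm_def)
next
  case (insert v S)
  then obtain Q where herm: "herm Q" and cols: "\<forall>j\<in>I. col I Q j \<in> P"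
    and idem: "\<forall>i\<in>I. \<forall>j\<in>I. (\<Sum>k\<in>I. Q i k * Q k j) = Q i j" and fS: "\<forall>v\<in>S. fixes_v I Q v"
    by auto
  have vP: "v \<in> P" using insert by auto
  define w where "w = (\<lambda>i. if i \<in> I then (\<Sum>j\<in>I. Q i j * v j) else 0)"
  define r where "r = v - w"
  have wP: "w \<in> P" unfolding w_def by (rule app_in_P[OF cols])
  have rP: "r \<in> P" unfolding r_def by (rule CS.subspace_diff[OF Psub vP wP])
  have r_out: "r i = 0" if "i \<notin> I" for i using Psupp[OF rP that] .
  have Qr: "(\<Sum>k\<in>I. Q i k * r k) = 0" if i: "i \<in> I" for i
  proof -
    have "(\<Sum>k\<in>I. Q i k * r k) = (\<Sum>k\<in>I. Q i k * v k) - (\<Sum>k\<in>I. Q i k * (\<Sum>j\<in>I. Q k j * v j))"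
      by (simp add: r_def w_def right_diff_distrib sum_subtractf)
    also have "(\<Sum>k\<in>I. Q i k * (\<Sum>j\<in>I. Q k j * v j)) = (\<Sum>j\<in>I. (\<Sum>k\<in>I. Q i k * Q k j) * v j)"
      by (rule swap_mult)
    also have "\<dots> = (\<Sum>j\<in>I. Q i j * v j)" using idem i by simp
    finally show ?thesis by simp
  qed
  have rQ: "(\<Sum>k\<in>I. cnj (r k) * Q k j) = 0" if j: "j \<in> I" for j
  proof -
    have "(\<Sum>k\<in>I. cnj (r k) * Q k j) = (\<Sum>k\<in>I. cnj (Q j k) * cnj (r k))"
      by (intro sum.cong refl) (metis herm herm_def mult.commute)
    also have "\<dots> = cnj (\<Sum>k\<in>I. Q j k * r k)" by simp
    finally have "(\<Sum>k\<in>I. cnj (r k) * Q k j) = cnj (\<Sum>k\<in>I. Q j k * r k)" .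
    then show ?thesis using Qr[OF j] by simp
  qed
  have rS: "(\<Sum>k\<in>I. cnj (r k) * s k) = 0" if s: "s \<in> S" for s
  proof -
    have "(\<Sum>k\<in>I. cnj (r k) * s k) = (\<Sum>k\<in>I. cnj (r k) * (\<Sum>j\<in>I. Q k j * s j))"
      using fS s unfolding fixes_v_def by (intro sum.cong) auto
    also have "\<dots> = (\<Sum>j\<in>I. (\<Sum>k\<in>I. cnj (r k) * Q k j) * s j)"
      by (rule swap_mult)
    also have "\<dots> = 0" using rQ by simp
    finally show ?thesis .
  qed
  define nr where "nr = (\<Sum>k\<in>I. cnj (r k) * r k)"
  have rv: "(\<Sum>k\<in>I. cnj (r k) * v k) = nr"
  proof -
    have "(\<Sum>k\<in>I. cnj (r k) * v k) = (\<Sum>k\<in>I. cnj (r k) * r k) + (\<Sum>k\<in>I. cnj (r k) * (\<Sum>j\<in>I. Q k j * v j))"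
      by (simp add: r_def w_def sum.distrib[symmetric] distrib_left[symmetric])
    also have "(\<Sum>k\<in>I. cnj (r k) * (\<Sum>j\<in>I. Q k j * v j)) = (\<Sum>j\<in>I. (\<Sum>k\<in>I. cnj (r k) * Q k j) * v j)"
      by (rule swap_mult)
    also have "\<dots> = 0" using rQ by simp
    finally show ?thesis by (simp add: nr_def)
  qed
  show ?case
  proof (cases "\<forall>i\<in>I. r i = 0")
    case True
    have "fixes_v I Q v" unfolding fixes_v_def
    proof
      fix i assume i: "i \<in> I"
      have "r i = 0" using True i by auto
      then show "(\<Sum>j\<in>I. Q i j * v j) = v i" using i by (simp add: r_def w_def)
    qed
    then show ?thesis using herm cols idem fS by auto
  next
    case False
    then obtain i0 where i0: "i0 \<in> I" "r i0 \<noteq> 0" by auto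
    have nr0: "nr \<noteq> 0" unfolding nr_def by (rule cnj_sum_pos[of I i0 r, OF fI i0])
    have cnr: "cnj nr = nr" unfolding nr_def by (simp add: mult.commute)
    define q where "q j = cnj (r j) / nr" for j
    define Q' where "Q' i j = Q i j + r i * q j" for i j
    have qr: "(\<Sum>k\<in>I. q k * r k) = 1"
      using nr0 by (simp add: q_def nr_def sum_divide_distrib[symmetric])
    have qQ: "(\<Sum>k\<in>I. q k * Q k j) = 0" if "j \<in> I" for j
      using rQ[OF that] by (simp add: q_def sum_divide_distrib[symmetric])
    have herm': "herm Q'" unfolding herm_def
    proof (intro allI)
      fix i j
      show "Q' j i = cnj (Q' i j)"
        using herm[unfolded herm_def, rule_format, of i j] cnr by (simp add: Q'_def q_def mult.commute)
    qed
    have cols': "\<forall>j\<in>I. col I Q' j \<in> P"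
    proof
      fix j assume j: "j \<in> I"
      have "col I Q' j = col I Q j + cs (q j) r"
        using r_out by (auto simp: fun_eq_iff col_def Q'_def cs_def mult.commute)
      then show "col I Q' j \<in> P"
        using cols j by (auto intro!: CS.subspace_add[OF Psub] CS.subspace_scale[OF Psub] rP)
    qed
    have idem': "\<forall>i\<in>I. \<forall>j\<in>I. (\<Sum>k\<in>I. Q' i k * Q' k j) = Q' i j"
    proof (intro ballI)
      fix i j assume i: "i \<in> I" and j: "j \<in> I"
      have "(\<Sum>k\<in>I. Q' i k * Q' k j) = (\<Sum>k\<in>I. Q i k * Q k j) + (\<Sum>k\<in>I. Q i k * r k) * q j
          + r i * (\<Sum>k\<in>I. q k * Q k j) + r i * (\<Sum>k\<in>I. q k * r k) * q j"
        unfolding Q'_def by (rule expand4)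
      also have "\<dots> = Q' i j" using idem i j Qr[OF i] qQ[OF j] qr by (simp add: Q'_def)
      finally show "(\<Sum>k\<in>I. Q' i k * Q' k j) = Q' i j" .
    qed
    have fS': "\<forall>s\<in>insert v S. fixes_v I Q' s"
    proof
      fix s assume s: "s \<in> insert v S"
      show "fixes_v I Q' s" unfolding fixes_v_def
      proof
        fix i assume i: "i \<in> I"
        have e: "(\<Sum>j\<in>I. Q' i j * s j) = (\<Sum>j\<in>I. Q i j * s j) + r i * ((\<Sum>j\<in>I. cnj (r j) * s j) / nr)"
          unfolding Q'_def expand2 q_def by (simp add: sum_divide_distrib)
        show "(\<Sum>j\<in>I. Q' i j * s j) = s i"
        proof (cases "s = v")
          case True
          then show ?thesis using e rv nr0 i by (simp add: r_def w_def)
        next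
          case False
          then have "s \<in> S" using s by auto
          then show ?thesis using e rS fS i unfolding fixes_v_def by simp
        qed
      qed
    qed
    show ?thesis using herm' cols' idem' fS' by blast
  qed
qed

lemma proj_exists:
  "\<exists>Q. herm Q \<and> (\<forall>j\<in>I. col I Q j \<in> P) \<and> (\<forall>\<xi>\<in>P. fixes_v I Q \<xi>)"
proof -
  define EI where "EI = (\<lambda>i. (\<lambda>j. if j = i then (1::complex) else 0)) ` I"
  have PE: "P \<subseteq> CS.span EI"
  proof
    fix \<xi> assume \<xi>: "\<xi> \<in> P"
    have "\<xi> = (\<Sum>i\<in>I. cs (\<xi> i) (\<lambda>j. if j = i then 1 else 0))"
      using Psupp[OF \<xi>] fI by (auto simp: fun_eq_iff sum_apply cs_def if_distrib[of "\<lambda>x. _ * x"] sum.delta' cong: if_cong)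
    also have "\<dots> \<in> CS.span EI"
      by (intro CS.span_sum CS.span_scale CS.span_base) (auto simp: EI_def)
    finally show "\<xi> \<in> CS.span EI" .
  qed
  obtain B where B: "B \<subseteq> P" "CS.independent B" "P \<subseteq> CS.span B"
    using CS.maximal_independent_subset[of P] by blast
  have fB: "finite B"
    using CS.independent_span_bound[of EI B] B PE fI by (auto simp: EI_def)
  obtain Q where Q: "herm Q" "\<forall>j\<in>I. col I Q j \<in> P" "\<forall>v\<in>B. fixes_v I Q v"
    using GS[OF fB B(1)] by blast
  have "fixes_v I Q \<xi>" if "\<xi> \<in> P" for \<xi>
  proof -
    have "\<xi> \<in> CS.span B" using that B by auto
    then show ?thesis
    proof (induction rule: CS.span_induct)
      case base
      show ?case by (rule fixes_subspace)
    next
      case (step x)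
      then show ?case using Q by auto
    qed
  qed
  then show ?thesis using Q by blast
qed

end

context
  fixes H :: "('a::ring_1) hopf_data"
  assumes hsa: "hopf_star_algebra H"
begin

lemma sc_swap: "(\<Sum>k\<in>I. sc H (a k) (\<Sum>j\<in>J. sc H (b k j) (c j))) = (\<Sum>j\<in>J. sc H (\<Sum>k\<in>I. a k * b k j) (c j))"
proof -
  have "(\<Sum>k\<in>I. sc H (a k) (\<Sum>j\<in>J. sc H (b k j) (c j))) = (\<Sum>k\<in>I. \<Sum>j\<in>J. sc H (a k * b k j) (c j))"
    by (simp add: sc_sum[OF hsa] sc_sc[OF hsa])
  also have "\<dots> = (\<Sum>j\<in>J. \<Sum>k\<in>I. sc H (a k * b k j) (c j))" by (rule sum.swap)
  also have "\<dots> = (\<Sum>j\<in>J. sc H (\<Sum>k\<in>I. a k * b k j) (c j))" by (simp add: sc_sum_left[OF hsa])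
  finally show ?thesis .
qed

lemma sc_swap2: "(\<Sum>l\<in>I. sc H (a l) (\<Sum>k\<in>J. sc H (b k) (c k l))) = (\<Sum>k\<in>J. sc H (b k) (\<Sum>l\<in>I. sc H (a l) (c k l)))"
proof -
  have "(\<Sum>l\<in>I. sc H (a l) (\<Sum>k\<in>J. sc H (b k) (c k l))) = (\<Sum>l\<in>I. \<Sum>k\<in>J. sc H (a l * b k) (c k l))"
    by (simp add: sc_sum[OF hsa] sc_sc[OF hsa])
  also have "\<dots> = (\<Sum>k\<in>J. \<Sum>l\<in>I. sc H (a l * b k) (c k l))" by (rule sum.swap)
  also have "\<dots> = (\<Sum>k\<in>J. sc H (b k) (\<Sum>l\<in>I. sc H (a l) (c k l)))"
    by (simp add: sc_sum[OF hsa] sc_sc[OF hsa] mult.commute)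
  finally show ?thesis .
qed

lemma lin_comb: "lin (sc H) g \<Longrightarrow> g (\<Sum>j\<in>J. sc H (a j) (c j)) = (\<Sum>j\<in>J. a j * g (c j))"
  by (simp add: lin_sum linD)

lemma st_comb: "st H (\<Sum>j\<in>J. sc H (a j) (c j)) = (\<Sum>j\<in>J. sc H (cnj (a j)) (st H (c j)))"
  by (simp add: st_sum[OF hsa] hsa_stsc[OF hsa])

lemma ant_comb: "ant H (\<Sum>j\<in>J. sc H (a j) (c j)) = (\<Sum>j\<in>J. sc H (a j) (ant H (c j)))"
  by (simp add: ant_sum[OF hsa] hsa_antsc[OF hsa])

lemma core:
  fixes I :: "'i set" and M :: "'i \<Rightarrow> 'i \<Rightarrow> 'a" and \<phi> :: "'i \<Rightarrow> 'a"
  assumes fI: "finite I"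
    and Vsub: "module.subspace (sc H) V"
    and Vco: "\<And>v g. v \<in> V \<Longrightarrow> lin (sc H) g \<Longrightarrow> \<exists>w\<in>V. \<forall>f. lin (sc H) f \<longrightarrow> f w = E H f g v"
    and M1: "\<And>f g j. lin (sc H) f \<Longrightarrow> lin (sc H) g \<Longrightarrow> j \<in> I \<Longrightarrow>
                E H f g (\<phi> j) = (\<Sum>i\<in>I. f (\<phi> i) * g (M i j))"
    and U1: "\<And>i j. i \<in> I \<Longrightarrow> j \<in> I \<Longrightarrow> st H (M j i) = ant H (M i j)"
    and p0I: "\<And>i. i \<notin> I \<Longrightarrow> p0 i = 0"
    and p0V: "(\<Sum>i\<in>I. sc H (p0 i) (\<phi> i)) \<in> V"
    and p0nz: "cou H (\<Sum>i\<in>I. sc H (p0 i) (\<phi> i)) \<noteq> 0"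
  shows "\<exists>\<psi>. (\<forall>j\<in>I. \<psi> j \<in> V) \<and>
     (\<forall>f g j. lin (sc H) f \<longrightarrow> lin (sc H) g \<longrightarrow> j \<in> I \<longrightarrow> E H f g (\<psi> j) = (\<Sum>i\<in>I. f (\<psi> i) * g (M i j))) \<and>
     (\<exists>j\<in>I. cou H (\<psi> j) \<noteq> 0)"
proof -
  interpret VA: vector_space "sc H" by (rule hsa_vs[OF hsa])
  interpret CS: vector_space cs by (rule vs_cs)
  define \<Phi> where "\<Phi> \<xi> = (\<Sum>i\<in>I. sc H (\<xi> i) (\<phi> i))" for \<xi>
  define P where "P = {\<xi>. (\<forall>i. i \<notin> I \<longrightarrow> \<xi> i = 0) \<and> \<Phi> \<xi> \<in> V}"
  have Psub: "CS.subspace P" unfolding CS.subspace_def P_def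
  proof (intro conjI ballI allI impI)
    show "0 \<in> {\<xi>. (\<forall>i. i \<notin> I \<longrightarrow> \<xi> i = 0) \<and> \<Phi> \<xi> \<in> V}"
      using VA.subspace_0[OF Vsub] by (simp add: \<Phi>_def sc_zero[OF hsa])
  next
    fix x y assume "x \<in> {\<xi>. (\<forall>i. i \<notin> I \<longrightarrow> \<xi> i = 0) \<and> \<Phi> \<xi> \<in> V}"
      "y \<in> {\<xi>. (\<forall>i. i \<notin> I \<longrightarrow> \<xi> i = 0) \<and> \<Phi> \<xi> \<in> V}"
    then show "x + y \<in> {\<xi>. (\<forall>i. i \<notin> I \<longrightarrow> \<xi> i = 0) \<and> \<Phi> \<xi> \<in> V}"
      using VA.subspace_add[OF Vsub, of "\<Phi> x" "\<Phi> y"]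
      by (simp add: \<Phi>_def sc_add[OF hsa] sum.distrib)
  next
    fix c x assume "x \<in> {\<xi>. (\<forall>i. i \<notin> I \<longrightarrow> \<xi> i = 0) \<and> \<Phi> \<xi> \<in> V}"
    then show "cs c x \<in> {\<xi>. (\<forall>i. i \<notin> I \<longrightarrow> \<xi> i = 0) \<and> \<Phi> \<xi> \<in> V}"
      using VA.subspace_scale[OF Vsub, of "\<Phi> x" c]
      by (simp add: \<Phi>_def cs_def sc_sum[OF hsa] sc_sc[OF hsa])
  qed
  have Psupp: "\<xi> i = 0" if "\<xi> \<in> P" "i \<notin> I" for \<xi> i using that unfolding P_def by auto
  obtain Q where herm: "herm Q" and cols: "\<forall>j\<in>I. col I Q j \<in> P" and fixP: "\<forall>\<xi>\<in>P. fixes_v I Q \<xi>"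
  proof -
    have "\<exists>Q. herm Q \<and> (\<forall>j\<in>I. col I Q j \<in> P) \<and> (\<forall>\<xi>\<in>P. fixes_v I Q \<xi>)"
    proof (rule proj_exists[of I P, OF fI Psub])
      fix \<xi> i assume "\<xi> \<in> P" "i \<notin> I" then show "\<xi> i = 0" by (rule Psupp)
    qed
    then show ?thesis using that by blast
  qed
  have inv: "(\<lambda>i. if i \<in> I then g (\<Sum>j\<in>I. sc H (\<xi> j) (M i j)) else 0) \<in> P"
    if \<xi>: "\<xi> \<in> P" and g: "lin (sc H) g" for \<xi> g
  proof -
    define \<eta> where "\<eta> = (\<lambda>i. if i \<in> I then g (\<Sum>j\<in>I. sc H (\<xi> j) (M i j)) else 0)"
    have "\<Phi> \<xi> \<in> V" using \<xi> unfolding P_def by auto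
    then obtain w where w: "w \<in> V" "\<And>f. lin (sc H) f \<Longrightarrow> f w = E H f g (\<Phi> \<xi>)" using Vco g by blast
    have "w = \<Phi> \<eta>"
    proof (rule sep[OF hsa])
      fix f assume f: "lin (sc H) f"
      have "f w = E H f g (\<Phi> \<xi>)" by (rule w(2)[OF f])
      also have "\<dots> = (\<Sum>j\<in>I. \<xi> j * E H f g (\<phi> j))"
        unfolding \<Phi>_def by (rule lin_comb[OF lin_E[OF hsa f g]])
      also have "\<dots> = (\<Sum>j\<in>I. \<xi> j * (\<Sum>i\<in>I. f (\<phi> i) * g (M i j)))"
        by (intro sum.cong refl) (simp add: M1[OF f g])
      also have "\<dots> = (\<Sum>i\<in>I. f (\<phi> i) * (\<Sum>j\<in>I. \<xi> j * g (M i j)))"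
        by (simp add: sum_distrib_left mult.left_commute) (rule sum.swap)
      also have "\<dots> = f (\<Phi> \<eta>)"
        unfolding \<Phi>_def lin_comb[OF f] \<eta>_def
        by (intro sum.cong refl) (simp add: lin_comb[OF g] mult.commute)
      finally show "f w = f (\<Phi> \<eta>)" .
    qed
    then show ?thesis using w(1) unfolding P_def \<eta>_def by auto
  qed
  define X where "X i j = (\<Sum>k\<in>I. sc H (Q k j) (M i k))" for i j
  have step1: "(\<Sum>l\<in>I. sc H (Q i l) (X l j)) = X i j" if i: "i \<in> I" and j: "j \<in> I" for i j
  proof (rule sep[OF hsa])
    fix g assume g: "lin (sc H) g"
    have cj: "col I Q j \<in> P" using cols j by auto
    have Xe: "X l j = (\<Sum>k\<in>I. sc H (col I Q j k) (M l k))" for l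
      unfolding X_def col_def by (intro sum.cong refl) auto
    let ?\<eta> = "\<lambda>l. if l \<in> I then g (\<Sum>k\<in>I. sc H (col I Q j k) (M l k)) else 0"
    have \<eta>P: "?\<eta> \<in> P" by (rule inv[OF cj g])
    have "g (\<Sum>l\<in>I. sc H (Q i l) (X l j)) = (\<Sum>l\<in>I. Q i l * ?\<eta> l)"
      unfolding lin_comb[OF g] Xe by (intro sum.cong refl) simp
    also have "\<dots> = ?\<eta> i"
    proof -
      have fx: "fixes_v I Q ?\<eta>" using fixP \<eta>P by blast
      show ?thesis using fx i unfolding fixes_v_def by auto
    qed
    also have "\<dots> = g (X i j)" using i Xe by simp
    finally show "g (\<Sum>l\<in>I. sc H (Q i l) (X l j)) = g (X i j)" .
  qed
  have hQ: "cnj (Q i j) = Q j i" for i j using herm unfolding herm_def by metis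
  have comm: "(\<Sum>k\<in>I. sc H (Q i k) (M k j)) = X i j" if i: "i \<in> I" and j: "j \<in> I" for i j
  proof -
    have "(\<Sum>k\<in>I. sc H (Q i k) (M k j)) = st H (ant H (X j i))"
      unfolding X_def ant_comb st_comb
      by (intro sum.cong refl) (simp add: U1[OF j, symmetric] hsa_stst[OF hsa] hQ)
    also have "\<dots> = st H (ant H (\<Sum>l\<in>I. sc H (Q j l) (X l i)))" using step1[OF j i] by simp
    also have "\<dots> = (\<Sum>l\<in>I. sc H (Q l j) (\<Sum>k\<in>I. sc H (Q i k) (M k l)))"
      unfolding X_def ant_comb st_comb
      by (intro sum.cong refl) (simp add: U1[symmetric] hsa_stst[OF hsa] hQ)
    also have "\<dots> = (\<Sum>k\<in>I. sc H (Q i k) (\<Sum>l\<in>I. sc H (Q l j) (M k l)))"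
      by (rule sc_swap2)
    also have "\<dots> = (\<Sum>k\<in>I. sc H (Q i k) (X k j))"
      unfolding X_def by simp
    also have "\<dots> = X i j" by (rule step1[OF i j])
    finally show ?thesis .
  qed
  define \<psi> where "\<psi> j = (\<Sum>k\<in>I. sc H (Q k j) (\<phi> k))" for j
  have \<psi>V: "\<forall>j\<in>I. \<psi> j \<in> V"
  proof
    fix j assume j: "j \<in> I"
    have "col I Q j \<in> P" using cols j by auto
    then have "\<Phi> (col I Q j) \<in> V" unfolding P_def by auto
    moreover have "\<Phi> (col I Q j) = \<psi> j" unfolding \<Phi>_def \<psi>_def col_def by (intro sum.cong refl) auto
    ultimately show "\<psi> j \<in> V" by simp
  qed
  have \<psi>M1: "E H f g (\<psi> j) = (\<Sum>i\<in>I. f (\<psi> i) * g (M i j))"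
    if f: "lin (sc H) f" and g: "lin (sc H) g" and j: "j \<in> I" for f g j
  proof -
    have "E H f g (\<psi> j) = (\<Sum>k\<in>I. Q k j * (\<Sum>i\<in>I. f (\<phi> i) * g (M i k)))"
      unfolding \<psi>_def lin_comb[OF lin_E[OF hsa f g]] by (intro sum.cong refl) (simp add: M1[OF f g])
    also have "\<dots> = (\<Sum>i\<in>I. f (\<phi> i) * g (X i j))"
      unfolding X_def lin_comb[OF g]
      by (simp add: sum_distrib_left mult.left_commute) (rule sum.swap)
    also have "\<dots> = (\<Sum>i\<in>I. f (\<phi> i) * (\<Sum>l\<in>I. Q i l * g (M l j)))"
      using j by (intro sum.cong refl) (simp add: comm[symmetric] lin_comb[OF g])
    also have "\<dots> = (\<Sum>l\<in>I. f (\<psi> l) * g (M l j))"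
      unfolding \<psi>_def lin_comb[OF f]
      by (simp add: sum_distrib_left sum_distrib_right mult.assoc) (rule trans[OF _ sum.swap], simp add: ac_simps)
    finally show ?thesis .
  qed
  have p0P: "p0 \<in> P" unfolding P_def \<Phi>_def using p0I p0V by auto
  have "(\<Sum>i\<in>I. sc H (p0 i) (\<phi> i)) = (\<Sum>j\<in>I. sc H (p0 j) (\<psi> j))"
  proof -
    have "(\<Sum>j\<in>I. sc H (p0 j) (\<psi> j)) = (\<Sum>k\<in>I. sc H (\<Sum>j\<in>I. p0 j * Q k j) (\<phi> k))"
      unfolding \<psi>_def by (rule sc_swap)
    also have "\<dots> = (\<Sum>k\<in>I. sc H (p0 k) (\<phi> k))"
      using fixP p0P unfolding fixes_v_def by (intro sum.cong refl) (simp add: mult.commute)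
    finally show ?thesis by simp
  qed
  then have "cou H (\<Sum>j\<in>I. sc H (p0 j) (\<psi> j)) \<noteq> 0" using p0nz by simp
  then have "\<exists>j\<in>I. cou H (\<psi> j) \<noteq> 0"
    by (auto simp: lin_comb[OF lin_cou[OF hsa]] intro: ccontr)
  then show ?thesis using \<psi>V \<psi>M1 by blast
qed

end

lemma subspace_sum_list:
  assumes vs: "vector_space s" and "module.subspace s V" "\<And>x. x \<in> set xs \<Longrightarrow> h x \<in> V"
  shows "sum_list (map h xs) \<in> V"
proof -
  interpret vector_space s by fact
  show ?thesis using assms(2,3)
    by (induction xs) (auto intro: subspace_0 subspace_add)
qed

lemma sum_list_zero_pairs:
  "(\<And>a b. (a,b) \<in> set xs \<Longrightarrow> h a b = 0) \<Longrightarrow> sum_list (map (\<lambda>(a,b). h a b) xs) = (0::'b::comm_monoid_add)"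
  by (induction xs) auto

lemma sum_list_upt: "sum_list (map h [0..<n]) = (\<Sum>k<n. h k)"
  by (simp add: sum_list_sum_nth atLeast0LessThan)

theorem proposition1p2p1:
  fixes A :: "('a::ring_1) hopf_data" and C :: "('c::ring_1) hopf_data"
    and \<theta> :: "'a \<Rightarrow> 'c" and Z V :: "'a set" and N :: nat
  assumes "CQG_algebra A"
    and "star_subalgebra A Z" and "right_coideal A Z"
    and "hopf_star_algebra C"
    and "hopf_star_hom A C \<theta>" and "surj \<theta>"
    and "\<forall>z\<in>Z. \<theta> z = sc C (cou A z) 1"
    and "V \<subseteq> Z" and "right_coideal A V"
    and "\<exists>B. finite B \<and> module.span (sc A) B = V"
    and "vector_space.dim (sc A) V = N" and "N \<ge> 1"
  shows "\<exists>\<zeta>\<^sub>0\<in>V. \<zeta>\<^sub>0 \<noteq> 0 \<and>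
           tensor_eq (sc A) (sc C) (map (\<lambda>(a,b). (a, \<theta> b)) (cop A \<zeta>\<^sub>0)) [(\<zeta>\<^sub>0, 1)]"
proof -
  note cqg = assms(1) and hC = assms(4) and hom = assms(5) and Zh = assms(7) and VZ = assms(8)
    and Vco = assms(9) and dimN = assms(11) and N1 = assms(12)
  have hA: "hopf_star_algebra A" using cqg unfolding CQG_algebra_def by auto
  interpret VA: vector_space "sc A" by (rule hsa_vs[OF hA])
  have Vsub: "VA.subspace V" using Vco unfolding right_coideal_def by auto
  have Vco': "\<And>w. w \<in> V \<Longrightarrow> \<exists>xs. fst ` set xs \<subseteq> V \<and> teqH A (cop A w) xs"
    using Vco unfolding right_coideal_def by auto
  obtain v where vV: "v \<in> V" and v0: "v \<noteq> 0"
  proof (rule ccontr)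
    assume "\<not> thesis"
    with that have V0: "V \<subseteq> {0}" by auto
    obtain B where B: "B \<subseteq> V" "VA.independent B" "V \<subseteq> VA.span B" "card B = VA.dim V"
      using VA.basis_exists by blast
    have "B = {}" using B(1,2) V0 VA.dependent_zero by blast
    then show False using B(4) dimN N1 by simp
  qed
  obtain v1 where v1V: "v1 \<in> V" and v1c: "cou A v1 \<noteq> 0"
  proof (rule ccontr)
    assume "\<not> thesis"
    with that have allz: "\<And>x. x \<in> V \<Longrightarrow> cou A x = 0" by auto
    obtain xs where xs: "fst ` set xs \<subseteq> V" "teqH A (cop A v) xs" using Vco'[OF vV] by blast
    have "v = 0"
    proof (rule sep[OF hA])
      fix g assume g: "lin (sc A) g"
      have "g v = E A (cou A) g v" by (simp add: E_counit[OF hA g])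
      also have "\<dots> = sum_list (map (\<lambda>(a,b). cou A a * g b) xs)"
        using xs(2) lin_cou[OF hA] g unfolding E_def tensor_eq_def by blast
      also have "\<dots> = 0"
        using xs(1) allz by (intro sum_list_zero_pairs) force
      finally show "g v = g 0" by (simp add: lin_zero[OF g])
    qed
    then show False using v0 by simp
  qed
  have Vco2: "\<exists>w\<in>V. \<forall>f. lin (sc A) f \<longrightarrow> f w = E A f g w0"
    if w0: "w0 \<in> V" and g: "lin (sc A) g" for w0 g
  proof -
    obtain xs where xs: "fst ` set xs \<subseteq> V" "teqH A (cop A w0) xs" using Vco'[OF w0] by blast
    define w where "w = sum_list (map (\<lambda>(a,b). sc A (g b) a) xs)"
    have "w \<in> V" unfolding w_def
      by (rule subspace_sum_list[OF hsa_vs[OF hA] Vsub]) (use xs(1) in \<open>auto intro!: VA.subspace_scale[OF Vsub]\<close>)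
    moreover have "f w = E A f g w0" if f: "lin (sc A) f" for f
    proof -
      have "f w = sum_list (map (\<lambda>(a,b). f (sc A (g b) a)) xs)"
        unfolding w_def by (rule lin_sum_list2[OF f])
      also have "\<dots> = sum_list (map (\<lambda>(a,b). f a * g b) xs)"
        by (rule arg_cong[where f=sum_list], rule map_cong) (auto simp: linD[OF f])
      also have "\<dots> = E A f g w0"
        using xs(2) f g unfolding E_def tensor_eq_def by metis
      finally show ?thesis .
    qed
    ultimately show ?thesis by blast
  qed
  define Cf where "Cf = {u i j | n u i j. unitary_corep A n u \<and> i < n \<and> j < n}"
  have "v1 \<in> VA.span Cf" using cqg unfolding CQG_algebra_def Cf_def by auto
  then obtain T c where T: "finite T" "T \<subseteq> Cf" and v1e: "v1 = (\<Sum>t\<in>T. sc A (c t) t)"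
    unfolding VA.span_explicit by blast
  have "\<forall>t\<in>T. \<exists>x. unitary_corep A (fst x) (fst (snd x)) \<and> fst (snd (snd x)) < fst x \<and>
      snd (snd (snd x)) < fst x \<and> fst (snd x) (fst (snd (snd x))) (snd (snd (snd x))) = t"
  proof
    fix t assume "t \<in> T"
    then have "t \<in> Cf" using T by auto
    then obtain n u i j where "unitary_corep A n u" "i < n" "j < n" "t = u i j" unfolding Cf_def by blast
    then show "\<exists>x. unitary_corep A (fst x) (fst (snd x)) \<and> fst (snd (snd x)) < fst x \<and>
      snd (snd (snd x)) < fst x \<and> fst (snd x) (fst (snd (snd x))) (snd (snd (snd x))) = t"
      by (intro exI[of _ "(n,u,i,j)"]) auto
  qed
  then obtain F where F: "\<forall>t\<in>T. unitary_corep A (fst (F t)) (fst (snd (F t))) \<and> fst (snd (snd (F t))) < fst (F t) \<and>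
      snd (snd (snd (F t))) < fst (F t) \<and> fst (snd (F t)) (fst (snd (snd (F t)))) (snd (snd (snd (F t)))) = t"
    by metis
  define nn where "nn t = fst (F t)" for t
  define uu where "uu t = fst (snd (F t))" for t
  define ii where "ii t = fst (snd (snd (F t)))" for t
  define jj where "jj t = snd (snd (snd (F t)))" for t
  have uni: "unitary_corep A (nn t) (uu t)" and iin: "ii t < nn t" and jjn: "jj t < nn t"
    and uut: "uu t (ii t) (jj t) = t" if "t \<in> T" for t
    using F that unfolding nn_def uu_def ii_def jj_def by auto
  define I where "I = Sigma T (\<lambda>t. {..<nn t})"
  have fI: "finite I" unfolding I_def using T(1) by auto
  define M where "M x y = (if fst x = fst y then uu (fst x) (snd x) (snd y) else 0)" for x y
  define \<phi> where "\<phi> x = uu (fst x) (ii (fst x)) (snd x)" for x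
  define p0 where "p0 x = (if x \<in> I \<and> snd x = jj (fst x) then c (fst x) else 0)" for x
  have M1: "E A f g (\<phi> y) = (\<Sum>x\<in>I. f (\<phi> x) * g (M x y))"
    if f: "lin (sc A) f" and g: "lin (sc A) g" and y: "y \<in> I" for f g y
  proof -
    obtain t b where yt: "y = (t,b)" "t \<in> T" "b < nn t" using y unfolding I_def by auto
    have teq: "teqH A (cop A (uu t (ii t) b)) (map (\<lambda>k. (uu t (ii t) k, uu t k b)) [0..<nn t])"
      using uni[OF yt(2)] iin[OF yt(2)] yt(3) unfolding unitary_corep_def by auto
    have "E A f g (\<phi> y) = (\<Sum>k<nn t. f (uu t (ii t) k) * g (uu t k b))"
      using teq f g unfolding E_def tensor_eq_def \<phi>_def yt(1)
      by (simp add: sum_list_upt[symmetric] comp_def)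
    also have "\<dots> = (\<Sum>t'\<in>T. \<Sum>k<nn t'. f (\<phi> (t',k)) * g (M (t',k) y))"
    proof -
      have "(\<Sum>t'\<in>T. \<Sum>k<nn t'. f (\<phi> (t',k)) * g (M (t',k) y))
          = (\<Sum>t'\<in>T. if t' = t then (\<Sum>k<nn t. f (uu t (ii t) k) * g (uu t k b)) else 0)"
        by (intro sum.cong refl) (auto simp: M_def \<phi>_def yt(1) lin_zero[OF g])
      also have "\<dots> = (\<Sum>k<nn t. f (uu t (ii t) k) * g (uu t k b))"
        using T(1) yt(2) by (simp add: sum.delta')
      finally show ?thesis by simp
    qed
    also have "\<dots> = (\<Sum>x\<in>I. f (\<phi> x) * g (M x y))"
      unfolding I_def by (simp add: sum.Sigma[OF T(1)] split_def)
    finally show ?thesis .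
  qed
  have U1: "st A (M y x) = ant A (M x y)" if x: "x \<in> I" and y: "y \<in> I" for x y
  proof (cases "fst x = fst y")
    case True
    obtain t c1 b where xy: "x = (t,c1)" "y = (t,b)" "t \<in> T" "c1 < nn t" "b < nn t"
      using x y True unfolding I_def by auto
    show ?thesis using unitary_U1[OF hA uni[OF xy(3)] xy(4,5)] unfolding M_def xy(1,2) by simp
  next
    case False
    then show ?thesis by (simp add: M_def st0[OF hA] ant0[OF hA])
  qed
  have M3: "(\<Sum>z\<in>I. M x z * st A (M y z)) = (if x = y then 1 else 0)"
    if x: "x \<in> I" and y: "y \<in> I" for x y
  proof -
    obtain t c1 where xt: "x = (t,c1)" "t \<in> T" "c1 < nn t" using x unfolding I_def by auto
    obtain t' b where yt: "y = (t',b)" "t' \<in> T" "b < nn t'" using y unfolding I_def by auto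
    have "(\<Sum>z\<in>I. M x z * st A (M y z)) = (\<Sum>s\<in>T. \<Sum>k<nn s. M x (s,k) * st A (M y (s,k)))"
      unfolding I_def by (simp add: sum.Sigma[OF T(1)] split_def)
    also have "\<dots> = (\<Sum>s\<in>T. if s = t then (\<Sum>k<nn t. M x (t,k) * st A (M y (t,k))) else 0)"
      by (intro sum.cong refl) (auto simp: M_def xt(1))
    also have "\<dots> = (\<Sum>k<nn t. M x (t,k) * st A (M y (t,k)))"
      using T(1) xt(2) by (simp add: sum.delta')
    also have "\<dots> = (if x = y then 1 else 0)"
    proof (cases "t' = t")
      case True
      then show ?thesis
        using unitary_U2[OF hA uni[OF xt(2)] xt(3), of b] yt(3) unfolding M_def xt(1) yt(1) by auto
    next
      case False
      then show ?thesis unfolding M_def xt(1) yt(1) by (simp add: st0[OF hA])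
    qed
    finally show ?thesis .
  qed
  have p0I: "p0 x = 0" if "x \<notin> I" for x using that unfolding p0_def by auto
  have p0e: "(\<Sum>x\<in>I. sc A (p0 x) (\<phi> x)) = v1"
  proof -
    have "(\<Sum>x\<in>I. sc A (p0 x) (\<phi> x)) = (\<Sum>t\<in>T. \<Sum>k<nn t. sc A (p0 (t,k)) (\<phi> (t,k)))"
      unfolding I_def by (simp add: sum.Sigma[OF T(1)] split_def)
    also have "\<dots> = (\<Sum>t\<in>T. \<Sum>k<nn t. if k = jj t then sc A (c t) (uu t (ii t) (jj t)) else 0)"
      by (intro sum.cong refl) (auto simp: p0_def \<phi>_def I_def sc_zero[OF hA])
    also have "\<dots> = (\<Sum>t\<in>T. sc A (c t) t)"
      by (intro sum.cong refl) (simp add: jjn uut)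
    finally show ?thesis using v1e by simp
  qed
  have "\<exists>\<psi>. (\<forall>j\<in>I. \<psi> j \<in> V) \<and>
     (\<forall>f g j. lin (sc A) f \<longrightarrow> lin (sc A) g \<longrightarrow> j \<in> I \<longrightarrow> E A f g (\<psi> j) = (\<Sum>i\<in>I. f (\<psi> i) * g (M i j))) \<and>
     (\<exists>j\<in>I. cou A (\<psi> j) \<noteq> 0)"
    by (rule core[OF hA fI Vsub Vco2 M1 U1 p0I]) (use p0e v1V v1c in auto)
  then obtain \<psi> where \<psi>V: "\<forall>j\<in>I. \<psi> j \<in> V"
    and \<psi>M1: "\<forall>f g j. lin (sc A) f \<longrightarrow> lin (sc A) g \<longrightarrow> j \<in> I \<longrightarrow> E A f g (\<psi> j) = (\<Sum>i\<in>I. f (\<psi> i) * g (M i j))"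
    and \<psi>nz: "\<exists>j\<in>I. cou A (\<psi> j) \<noteq> 0"
    by blast
  show ?thesis
    by (rule final_step[OF hA hC hom Zh VZ Vsub fI, of \<psi> M])
       (use \<psi>V \<psi>M1 M3 \<psi>nz in auto)
qed

end
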